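(* Let $d\ge 3$ be an integer and let $\mathbf{u}=(u_1,\dots,u_d)$, $\rho>0$ be a smooth solution on $\mathbb{E}^d$ (Euclidean $d$-space with Cartesian coordinates $x_1,\dots,x_d$) of the ideal barotropic equations $$\partial_t \mathbf{u}+(\mathbf{u}\cdot\nabla)\mathbf{u}=-\nabla \Pi,\qquad \partial_t\rho+\nabla\cdot(\rho\mathbf{u})=0,$$ where $p=p(\rho)$ and $\nabla\Pi=\nabla p/\rho$. Assume the flow is a real Schur flow: for all times and points, $\partial_{x_k}u_j=0$ whenever $\lceil k/2\rceil>\lceil j/2\rceil$ (i.e. the velocity gradient matrix $G$ with entries $G_{kj}=\partial_{x_k}u_j$ is uniformly block upper triangular with diagonal blocks indexed by $\{1,2\},\{3,4\},\dots$). Set $M=\lfloor \frac{d+1}{2}\rfloor$ and, with the convention $u_{d+1}\equiv 0$ (and the term $u_{d+1}dx_{d+1}$ omitted) when $d$ is odd, define for $i=1,\dots,M$ the 1-forms $$U_i:=u_{2i-1}\,dx_{2i-1}+u_{2i}\,dx_{2i},\qquad \Omega_i:=dU_i .$$ Then $\Omega_1,\dots,\Omega_M$ are linearly independent, $\sum_{i=1}^M\Omega_i=\Omega:=dU$ where $U=\sum_{j=1}^d u_j\,dx_j$, and each component is Lie-invariant with respect to the flow: $(\partial_t+L_{\mathbf{u}})\Omega_i=0$ for $i=1,\dots,M$. In particular the vorticity 2-form admits a Lie-invariant decomposition into $M=\lfloor\frac{d+1}{2}\rfloor$ components.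
   Context: $L_{\mathbf{u}}$ denotes the Lie derivative along the vector field $\mathbf{u}$ (acting on differential forms, $L_{\mathbf{u}}=\iota_{\mathbf{u}}d+d\iota_{\mathbf{u}}$ with $\iota_{\mathbf{u}}$ the interior product). A Lie-invariant decomposition of the vorticity 2-form $\Omega=dU$ into $M\ge1$ components is a representation $\Omega=\sum_{i=1}^M\Omega_i$ with linearly independent 2-forms $\Omega_i$ each satisfying $(\partial_t+L_{\mathbf{u}})\Omega_i=0$. $\lfloor\cdot\rfloor$ denotes the integer part. *)

theory Defs
  imports "HOL-Analysis.Analysis"
begin

fun Ck_on :: "'a::euclidean_space set \<Rightarrow> nat \<Rightarrow> ('a \<Rightarrow> real) \<Rightarrow> bool" where
  "Ck_on S 0 f = continuous_on S f"
| "Ck_on S (Suc n) f =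
     (f differentiable_on S \<and> (\<forall>v. Ck_on S n (\<lambda>z. frechet_derivative f (at z) v)))"

definition smooth_on :: "'a::euclidean_space set \<Rightarrow> ('a \<Rightarrow> real) \<Rightarrow> bool" where
  "smooth_on S f \<longleftrightarrow> (\<forall>n. Ck_on S n f)"

text \<open>The Cartesian coordinates x_1..x_d (d = CARD('n)) are given by a
  bijection coord : {1..d} -> 'n, i.e. x_k = x $ coord k.\<close>

definition smooth_field :: "(real \<Rightarrow> real^'n \<Rightarrow> real) \<Rightarrow> bool" where
  "smooth_field f \<longleftrightarrow> smooth_on UNIV (\<lambda>(t, x). f t x)"

definition dt :: "(real \<Rightarrow> real^'n \<Rightarrow> real) \<Rightarrow> real \<Rightarrow> real^'n \<Rightarrow> real" where
  "dt f t x = frechet_derivative (\<lambda>(s, y). f s y) (at (t, x)) (1, 0)"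

definition dx :: "(nat \<Rightarrow> 'n::finite) \<Rightarrow> nat \<Rightarrow> (real \<Rightarrow> real^'n \<Rightarrow> real) \<Rightarrow> real \<Rightarrow> real^'n \<Rightarrow> real" where
  "dx coord k f t x = frechet_derivative (\<lambda>(s, y). f s y) (at (t, x)) (0, axis (coord k) 1)"

text \<open>A p-form is given by its fully antisymmetric coefficients w_{k1...kp} with respect to
  dx_1..dx_d, i.e. w = (1/p!) sum w_{k1..kp} dx_k1 ^ ... ^ dx_kp; indices range over {1..d}.\<close>

type_synonym ('n) form1 = "real \<Rightarrow> real^'n \<Rightarrow> nat \<Rightarrow> real"
type_synonym ('n) form2 = "real \<Rightarrow> real^'n \<Rightarrow> nat \<Rightarrow> nat \<Rightarrow> real"
type_synonym ('n) form3 = "real \<Rightarrow> real^'n \<Rightarrow> nat \<Rightarrow> nat \<Rightarrow> nat \<Rightarrow> real"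

definition ext_d1 :: "(nat \<Rightarrow> 'n::finite) \<Rightarrow> 'n form1 \<Rightarrow> 'n form2" where
  "ext_d1 coord a t x k j =
     dx coord k (\<lambda>s y. a s y j) t x - dx coord j (\<lambda>s y. a s y k) t x"

definition ext_d2 :: "(nat \<Rightarrow> 'n::finite) \<Rightarrow> 'n form2 \<Rightarrow> 'n form3" where
  "ext_d2 coord w t x k l m =
     dx coord k (\<lambda>s y. w s y l m) t x + dx coord l (\<lambda>s y. w s y m k) t x
     + dx coord m (\<lambda>s y. w s y k l) t x"

definition iota2 :: "nat \<Rightarrow> 'n form1 \<Rightarrow> 'n form2 \<Rightarrow> 'n form1" where
  "iota2 d v w t x m = (\<Sum>k=1..d. v t x k * w t x k m)"

definition iota3 :: "nat \<Rightarrow> 'n form1 \<Rightarrow> 'n form3 \<Rightarrow> 'n form2" where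
  "iota3 d v h t x l m = (\<Sum>k=1..d. v t x k * h t x k l m)"

text \<open>Lie derivative of a 2-form by Cartan's formula L_v = iota_v d + d iota_v\<close>
definition lie2 :: "nat \<Rightarrow> (nat \<Rightarrow> 'n::finite) \<Rightarrow> 'n form1 \<Rightarrow> 'n form2 \<Rightarrow> 'n form2" where
  "lie2 d coord v w t x k j =
     iota3 d v (ext_d2 coord w) t x k j + ext_d1 coord (iota2 d v w) t x k j"

definition vcomp :: "(nat \<Rightarrow> 'n::finite) \<Rightarrow> (real \<Rightarrow> real^'n \<Rightarrow> real^'n) \<Rightarrow> 'n form1" where
  "vcomp coord u t x j = u t x $ coord j"

definition blk :: "nat \<Rightarrow> nat" where
  "blk k = (k + 1) div 2"

text \<open>U = sum_j u_j dx_j and U_i = u_{2i-1} dx_{2i-1} + u_{2i} dx_{2i}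
  (only coordinates within 1..d occur, so u_{d+1} dx_{d+1} is absent for odd d)\<close>
definition Uform :: "(nat \<Rightarrow> 'n::finite) \<Rightarrow> (real \<Rightarrow> real^'n \<Rightarrow> real^'n) \<Rightarrow> 'n form1" where
  "Uform coord u = vcomp coord u"

definition Ublock :: "(nat \<Rightarrow> 'n::finite) \<Rightarrow> (real \<Rightarrow> real^'n \<Rightarrow> real^'n) \<Rightarrow> nat \<Rightarrow> 'n form1" where
  "Ublock coord u i t x j = (if blk j = i then vcomp coord u t x j else 0)"

end

theory Submission
  imports Defs
begin


lemma line_deriv:
  fixes f :: "'a::real_normed_vector \<Rightarrow> real"
  assumes "(f has_derivative f') (at (a + s *\<^sub>R v))"
  shows "((\<lambda>s. f (a + s *\<^sub>R v)) has_real_derivative f' v) (at s)"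
proof -
  have "((\<lambda>s. a + s *\<^sub>R v) has_derivative (\<lambda>h. h *\<^sub>R v)) (at s)"
    by (intro derivative_eq_intros) auto
  from has_derivative_compose[OF this assms]
  have "((\<lambda>s. f (a + s *\<^sub>R v)) has_derivative (\<lambda>h. f' (h *\<^sub>R v))) (at s)" .
  moreover have "f' (h *\<^sub>R v) = f' v * h" for h
    using has_derivative_bounded_linear[OF assms] 
    by (simp add: linear_simps mult.commute)
  ultimately show ?thesis unfolding has_field_derivative_def
    by (metis (no_types, lifting) ext mult.commute)
qed

lemma delta_mvt:
  fixes f :: "'a::real_normed_vector \<Rightarrow> real"
  assumes d1: "\<And>y. (f has_derivative Df y) (at y)"
   and dv: "\<And>y. ((\<lambda>y. Df y v) has_derivative Dv y) (at y)"
   and h: "h > 0"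
  shows "\<exists>y. norm (y - z) \<le> h * (norm v + norm w) \<and>
     f (z + h *\<^sub>R v + h *\<^sub>R w) - f (z + h *\<^sub>R v) - f (z + h *\<^sub>R w) + f z = h^2 * Dv y w"
proof -
  define \<phi> where "\<phi> s = f ((z + h *\<^sub>R w) + s *\<^sub>R v) - f (z + s *\<^sub>R v)" for s
  have "DERIV \<phi> s :> Df ((z + h *\<^sub>R w) + s *\<^sub>R v) v - Df (z + s *\<^sub>R v) v" for s
    unfolding \<phi>_def by (intro DERIV_diff line_deriv d1)
  from MVT2[OF h, of \<phi>, OF this] obtain \<xi> where xi: "0 < \<xi>" "\<xi> < h"
    and e1: "\<phi> h - \<phi> 0 = (h - 0) * (Df ((z + h *\<^sub>R w) + \<xi> *\<^sub>R v) v - Df (z + \<xi> *\<^sub>R v) v)"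
    by blast
  define \<psi> where "\<psi> t = Df ((z + \<xi> *\<^sub>R v) + t *\<^sub>R w) v" for t
  have "DERIV \<psi> t :> Dv ((z + \<xi> *\<^sub>R v) + t *\<^sub>R w) w" for t
    unfolding \<psi>_def by (rule line_deriv[OF dv])
  from MVT2[OF h, of \<psi>, OF this] obtain \<eta> where eta: "0 < \<eta>" "\<eta> < h"
    and e2: "\<psi> h - \<psi> 0 = (h - 0) * Dv ((z + \<xi> *\<^sub>R v) + \<eta> *\<^sub>R w) w"
    by blast
  have "\<psi> h = Df ((z + h *\<^sub>R w) + \<xi> *\<^sub>R v) v" unfolding \<psi>_def by (simp add: algebra_simps)
  moreover have "\<psi> 0 = Df (z + \<xi> *\<^sub>R v) v" unfolding \<psi>_def by simp
  ultimately have e3: "\<phi> h - \<phi> 0 = h^2 * Dv ((z + \<xi> *\<^sub>R v) + \<eta> *\<^sub>R w) w"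
    using e1 e2 by (simp add: power2_eq_square)
  have "norm (((z + \<xi> *\<^sub>R v) + \<eta> *\<^sub>R w) - z) \<le> norm (\<xi> *\<^sub>R v) + norm (\<eta> *\<^sub>R w)"
    by (metis add_diff_cancel_left' add.assoc norm_triangle_ineq)
  also have "\<dots> \<le> h * norm v + h * norm w"
    using xi eta by (intro add_mono mult_right_mono) (auto simp: mult_right_mono)
  finally have n: "norm (((z + \<xi> *\<^sub>R v) + \<eta> *\<^sub>R w) - z) \<le> h * (norm v + norm w)"
    by (simp add: algebra_simps)
  have "\<phi> h - \<phi> 0 = f (z + h *\<^sub>R v + h *\<^sub>R w) - f (z + h *\<^sub>R v) - f (z + h *\<^sub>R w) + f z"
    unfolding \<phi>_def by (simp add: algebra_simps)
  with e3 n show ?thesis by metis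
qed

lemma clairaut:
  fixes f :: "'a::real_normed_vector \<Rightarrow> real"
  assumes d1: "\<And>y. (f has_derivative Df y) (at y)"
   and dv: "\<And>y. ((\<lambda>y. Df y v) has_derivative Dv y) (at y)"
   and dw: "\<And>y. ((\<lambda>y. Df y w) has_derivative Dw y) (at y)"
   and cv: "continuous (at z) (\<lambda>y. Dv y w)" and cw: "continuous (at z) (\<lambda>y. Dw y v)"
  shows "Dv z w = Dw z v"
proof (rule ccontr)
  assume ne: "Dv z w \<noteq> Dw z v"
  define e where "e = \<bar>Dv z w - Dw z v\<bar> / 4"
  have e: "e > 0" using ne by (simp add: e_def)
  obtain d1' where d1': "d1' > 0" "\<And>y. dist y z < d1' \<Longrightarrow> dist (Dv y w) (Dv z w) < e"
    using cv e unfolding continuous_at_eps_delta by blast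
  obtain d2' where d2': "d2' > 0" "\<And>y. dist y z < d2' \<Longrightarrow> dist (Dw y v) (Dw z v) < e"
    using cw e unfolding continuous_at_eps_delta by blast
  define h where "h = min d1' d2' / (2 * (norm v + norm w + 1))"
  have hpos: "h > 0" using d1' d2' by (simp add: h_def add_nonneg_pos)
  have hb: "h * (norm v + norm w) < min d1' d2'"
  proof -
    have "h * (norm v + norm w) \<le> h * (norm v + norm w + 1)" using hpos by simp
    also have "\<dots> = min d1' d2' / 2" unfolding h_def
    proof -
      have "norm v + norm w + 1 > 0" by (simp add: add_nonneg_pos)
      thus "min d1' d2' / (2 * (norm v + norm w + 1)) * (norm v + norm w + 1) = min d1' d2' / 2"
        by (simp add: field_simps)
    qed
    also have "\<dots> < min d1' d2'" using d1'(1) d2'(1) by (simp add: min_def)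
    finally show ?thesis .
  qed
  obtain y1 where y1: "norm (y1 - z) \<le> h * (norm v + norm w)"
    "f (z + h *\<^sub>R v + h *\<^sub>R w) - f (z + h *\<^sub>R v) - f (z + h *\<^sub>R w) + f z = h^2 * Dv y1 w"
    using delta_mvt[OF d1 dv hpos] by blast
  obtain y2 where y2: "norm (y2 - z) \<le> h * (norm w + norm v)"
    "f (z + h *\<^sub>R w + h *\<^sub>R v) - f (z + h *\<^sub>R w) - f (z + h *\<^sub>R v) + f z = h^2 * Dw y2 v"
    using delta_mvt[OF d1 dw hpos] by blast
  have "h^2 * Dv y1 w = h^2 * Dw y2 v" using y1(2) y2(2) by (simp add: algebra_simps)
  hence eq: "Dv y1 w = Dw y2 v" using hpos by simp
  have "dist y1 z < d1'" using y1(1) hb by (simp add: dist_norm)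
  hence a1: "\<bar>Dv y1 w - Dv z w\<bar> < e" using d1'(2) by (simp add: dist_real_def)
  have "dist y2 z < d2'" using y2(1) hb by (simp add: dist_norm add.commute)
  hence a2: "\<bar>Dw y2 v - Dw z v\<bar> < e" using d2'(2) by (simp add: dist_real_def)
  from a1 a2 eq have "\<bar>Dv z w - Dw z v\<bar> < 2 * e" by linarith
  thus False using e unfolding e_def by simp
qed




abbreviation FD :: "('a::real_normed_vector \<Rightarrow> real) \<Rightarrow> 'a \<Rightarrow> 'a \<Rightarrow> real" where
  "FD f z \<equiv> frechet_derivative f (at z)"

definition smooth :: "('a::euclidean_space \<Rightarrow> real) \<Rightarrow> bool" where
  "smooth f \<longleftrightarrow> (\<forall>n. Ck_on UNIV n f)"

lemma sm_diff: "smooth f \<Longrightarrow> f differentiable (at y)"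
proof -
  assume "smooth f"
  hence "Ck_on UNIV (Suc 0) f" unfolding smooth_def by blast
  hence "f differentiable_on UNIV" by simp
  thus ?thesis by (simp add: differentiable_on_def)
qed

lemma sm_has: "smooth f \<Longrightarrow> (f has_derivative FD f y) (at y)"
  using sm_diff frechet_derivative_works by blast

lemma sm_D: "smooth f \<Longrightarrow> smooth (\<lambda>z. FD f z v)"
proof -
  assume "smooth f"
  hence "Ck_on UNIV (Suc n) f" for n unfolding smooth_def by blast
  thus ?thesis unfolding smooth_def by simp
qed

lemma sm_cont: "smooth f \<Longrightarrow> continuous (at y) f"
proof -
  assume "smooth f"
  hence "Ck_on UNIV 0 f" unfolding smooth_def by blast
  hence "continuous_on UNIV f" by simp
  thus ?thesis by (simp add: continuous_on_eq_continuous_at)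
qed

lemma sm_sym: "smooth f \<Longrightarrow> FD (\<lambda>y. FD f y v) z w = FD (\<lambda>y. FD f y w) z v"
  by (rule clairaut[where f=f and Df="\<lambda>y. FD f y"])
     (auto intro: sm_has sm_D sm_cont)

lemma FD_eq: "(f has_derivative f') (at z) \<Longrightarrow> FD f z v = f' v"
  using frechet_derivative_at by metis

lemma HD_lin2:
  assumes "f differentiable (at z)" "h differentiable (at z)"
  shows "((\<lambda>y. a * f y - b * h y) has_derivative (\<lambda>v. a * FD f z v - b * FD h z v)) (at z)"
  using assms unfolding frechet_derivative_works
  by (intro derivative_eq_intros) auto

lemma FD_lin2:
  assumes "f differentiable (at z)" "h differentiable (at z)"
  shows "FD (\<lambda>y. a * f y - b * h y) z v = a * FD f z v - b * FD h z v"
  by (rule FD_eq[OF HD_lin2[OF assms]])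

lemma HD_sumprod:
  assumes "\<And>l. l \<in> A \<Longrightarrow> f l differentiable (at z)" "\<And>l. l \<in> A \<Longrightarrow> h l differentiable (at z)"
  shows "((\<lambda>y. \<Sum>l\<in>A. f l y * h l y) has_derivative
     (\<lambda>v. \<Sum>l\<in>A. f l z * FD (h l) z v + FD (f l) z v * h l z)) (at z)"
  using assms unfolding frechet_derivative_works
  by (intro derivative_eq_intros) auto

lemma FD_sumprod:
  assumes "\<And>l. l \<in> A \<Longrightarrow> f l differentiable (at z)" "\<And>l. l \<in> A \<Longrightarrow> h l differentiable (at z)"
  shows "FD (\<lambda>y. \<Sum>l\<in>A. f l y * h l y) z v = (\<Sum>l\<in>A. f l z * FD (h l) z v + FD (f l) z v * h l z)"
  by (rule FD_eq[OF HD_sumprod[OF assms]])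

lemma FD_add:
  assumes "f differentiable (at z)" "h differentiable (at z)"
  shows "FD (\<lambda>y. f y + h y) z v = FD f z v + FD h z v"
proof -
  have "((\<lambda>y. f y + h y) has_derivative (\<lambda>v. FD f z v + FD h z v)) (at z)"
    using assms unfolding frechet_derivative_works by (intro derivative_eq_intros) auto
  from FD_eq[OF this] show ?thesis by simp
qed



definition Wf :: "(nat \<Rightarrow> 'a::euclidean_space \<Rightarrow> real) \<Rightarrow> (nat \<Rightarrow> 'a) \<Rightarrow> nat \<Rightarrow> nat \<Rightarrow> nat \<Rightarrow> 'a \<Rightarrow> real" where
  "Wf U e i a b y = of_bool (blk b = i) * FD (U b) y (e a) - of_bool (blk a = i) * FD (U a) y (e b)"

lemma core:
  fixes U F :: "nat \<Rightarrow> 'a::euclidean_space \<Rightarrow> real" and e :: "nat \<Rightarrow> 'a"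
  assumes sm: "\<And>l. smooth (U l)"
  and mom: "\<And>j y. j \<in> {1..d} \<Longrightarrow> FD (U j) y (e 0) + (\<Sum>l=1..d. U l y * FD (U j) y (e l)) = F j y"
  and Fsym: "\<And>k j. k\<in>{1..d} \<Longrightarrow> j\<in>{1..d} \<Longrightarrow> FD (F j) z (e k) = FD (F k) z (e j)"
  and schur: "\<And>k j y. k\<in>{1..d} \<Longrightarrow> j\<in>{1..d} \<Longrightarrow> blk k > blk j \<Longrightarrow> FD (U j) y (e k) = 0"
  and kj: "k\<in>{1..d}" "j\<in>{1..d}"
  shows "FD (Wf U e i k j) z (e 0)
     + (\<Sum>l=1..d. U l z * (FD (Wf U e i k j) z (e l) + FD (Wf U e i j l) z (e k) + FD (Wf U e i l k) z (e j)))
     + (FD (\<lambda>y. \<Sum>l=1..d. U l y * Wf U e i l j y) z (e k) - FD (\<lambda>y. \<Sum>l=1..d. U l y * Wf U e i l k y) z (e j)) = 0"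
proof -
  define g where "g a b = (\<lambda>y. FD (U b) y (e a))" for a b
  have gd: "g a b differentiable (at y)" for a b y unfolding g_def by (intro sm_diff sm_D sm)
  have Ud: "U l differentiable (at y)" for l y by (intro sm_diff sm)
  have Wf_eq: "Wf U e i a b = (\<lambda>y. of_bool (blk b = i) * g a b y - of_bool (blk a = i) * g b a y)" for a b
    by (rule ext) (simp add: Wf_def g_def)
  have Wd: "Wf U e i a b differentiable (at y)" for a b y
    unfolding Wf_eq using HD_lin2[OF gd gd] by (rule differentiableI)
  have DW: "FD (Wf U e i a b) z v = of_bool (blk b = i) * FD (g a b) z v - of_bool (blk a = i) * FD (g b a) z v" for a b v
    unfolding Wf_eq by (rule FD_lin2[OF gd gd])
  have Dsum: "FD (\<lambda>y. \<Sum>l=1..d. U l y * Wf U e i l b y) z v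
      = (\<Sum>l=1..d. U l z * FD (Wf U e i l b) z v + FD (U l) z v * Wf U e i l b z)" for b v
    by (rule FD_sumprod) (auto intro: Ud Wd)
  define H where "H a b = FD (F b) z (e a)" for a b
  have Hform: "H a b = FD (g a b) z (e 0) + (\<Sum>l=1..d. U l z * FD (g a b) z (e l) + g a l z * g l b z)"
    if b: "b \<in> {1..d}" for a b
  proof -
    have Fe: "F b = (\<lambda>y. g 0 b y + (\<Sum>l=1..d. U l y * g l b y))"
      by (rule ext) (simp add: mom[OF b, symmetric] g_def)
    have sd: "(\<lambda>y. \<Sum>l=1..d. U l y * g l b y) differentiable (at z)"
      using HD_sumprod[of "{1..d}" U z "\<lambda>l. g l b"] Ud gd by (auto intro: differentiableI)
    have "H a b = FD (g 0 b) z (e a) + FD (\<lambda>y. \<Sum>l=1..d. U l y * g l b y) z (e a)"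
      unfolding H_def Fe by (rule FD_add[OF gd sd])
    also have "FD (\<lambda>y. \<Sum>l=1..d. U l y * g l b y) z (e a)
        = (\<Sum>l=1..d. U l z * FD (g l b) z (e a) + FD (U l) z (e a) * g l b z)"
      by (rule FD_sumprod) (auto intro: Ud gd)
    also have "FD (g 0 b) z (e a) = FD (g a b) z (e 0)"
      unfolding g_def by (rule sm_sym[OF sm])
    also have "(\<Sum>l=1..d. U l z * FD (g l b) z (e a) + FD (U l) z (e a) * g l b z)
        = (\<Sum>l=1..d. U l z * FD (g a b) z (e l) + g a l z * g l b z)"
    proof (rule sum.cong[OF refl])
      fix l
      have "FD (g l b) z (e a) = FD (g a b) z (e l)" unfolding g_def by (rule sm_sym[OF sm])
      thus "U l z * FD (g l b) z (e a) + FD (U l) z (e a) * g l b z = U l z * FD (g a b) z (e l) + g a l z * g l b z"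
        by (simp add: g_def)
    qed
    finally show ?thesis .
  qed
  have Hzero: "H a b = 0" if ab: "a \<in> {1..d}" "b \<in> {1..d}" "blk a > blk b" for a b
  proof -
    have g0: "g a b = (\<lambda>y. 0)" unfolding g_def using schur[OF ab] by (rule ext)
    have "g a l z * g l b z = 0" if l: "l \<in> {1..d}" for l
    proof (cases "blk l < blk a")
      case True thus ?thesis using schur[OF ab(1) l] by (simp add: g_def)
    next
      case False thus ?thesis using schur[OF l ab(2)] ab(3) by (simp add: g_def)
    qed
    hence "(\<Sum>l=1..d. g a l z * g l b z) = 0" by (intro sum.neutral) auto
    thus ?thesis using Hform[OF ab(2)] g0 by (simp add: sum.distrib)
  qed
  have Hkj: "of_bool (blk j = i) * H k j - of_bool (blk k = i) * H j k = 0"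
  proof (cases "blk k = blk j")
    case True thus ?thesis using Fsym[OF kj] by (simp add: H_def)
  next
    case False
    hence "H k j = 0 \<and> H j k = 0"
      using Hzero[OF kj] Hzero[OF kj(2) kj(1)] Fsym[OF kj] unfolding H_def by (cases "blk k < blk j") auto
    thus ?thesis by simp
  qed
  define \<alpha> where "\<alpha> = (of_bool (blk j = i) :: real)"
  define \<beta> where "\<beta> = (of_bool (blk k = i) :: real)"
  define lam where "lam l = (of_bool (blk l = i) :: real)" for l
  define S where "S a b c = FD (g a b) z (e c)" for a b c
  have LHS: "?thesis \<longleftrightarrow> (\<alpha> * S k j 0 - \<beta> * S j k 0)
     + (\<Sum>l=1..d. U l z * ((\<alpha> * S k j l - \<beta> * S j k l) + (lam l * S j l k - \<alpha> * S l j k) + (\<beta> * S l k j - lam l * S k l j))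
        + (U l z * (\<alpha> * S l j k - lam l * S j l k) + g k l z * (\<alpha> * g l j z - lam l * g j l z))
        - (U l z * (\<beta> * S l k j - lam l * S k l j) + g j l z * (\<beta> * g l k z - lam l * g k l z))) = 0"
    unfolding DW Dsum \<alpha>_def \<beta>_def lam_def S_def
    by (simp add: sum.distrib sum_subtractf Wf_eq g_def algebra_simps)
  have "(\<alpha> * S k j 0 - \<beta> * S j k 0)
     + (\<Sum>l=1..d. U l z * ((\<alpha> * S k j l - \<beta> * S j k l) + (lam l * S j l k - \<alpha> * S l j k) + (\<beta> * S l k j - lam l * S k l j))
        + (U l z * (\<alpha> * S l j k - lam l * S j l k) + g k l z * (\<alpha> * g l j z - lam l * g j l z))
        - (U l z * (\<beta> * S l k j - lam l * S k l j) + g j l z * (\<beta> * g l k z - lam l * g k l z)))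
     = (\<alpha> * S k j 0 - \<beta> * S j k 0)
     + (\<Sum>l=1..d. \<alpha> * (U l z * S k j l + g k l z * g l j z) - \<beta> * (U l z * S j k l + g j l z * g l k z))"
    by (intro arg_cong2[where f="(+)"] refl sum.cong) (simp_all add: algebra_simps)
  also have "\<dots> = \<alpha> * H k j - \<beta> * H j k"
    using Hform[OF kj(2), of k] Hform[OF kj(1), of j]
    by (simp add: S_def sum_subtractf sum_distrib_left sum.distrib distrib_left)
  also have "\<dots> = 0" using Hkj by (simp add: \<alpha>_def \<beta>_def)
  finally show ?thesis using LHS by simp
qed



lemma lin1: "bounded_linear (L :: real \<Rightarrow> real) \<Longrightarrow> L h = h * L 1"
proof -
  assume "bounded_linear L"
  then interpret bounded_linear L .
  have "L (h *\<^sub>R 1) = h *\<^sub>R L 1" by (rule scaleR)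
  thus ?thesis by simp
qed

lemma pressure_sym:
  fixes R :: "'a::euclidean_space \<Rightarrow> real" and p :: "real \<Rightarrow> real"
  assumes smR: "smooth R" and Rpos: "\<And>y. R y > 0" and smp: "smooth_on {0<..} p"
  shows "FD (\<lambda>y. - FD (\<lambda>y. p (R y)) y v / R y) z w = FD (\<lambda>y. - FD (\<lambda>y. p (R y)) y w / R y) z v"
proof -
  define p1 where "p1 r = frechet_derivative p (at r) 1" for r
  have ck: "Ck_on {0<..} (Suc (Suc 0)) p" using smp unfolding smooth_on_def by blast
  have pd: "p differentiable (at r)" if "r > 0" for r
  proof -
    from ck have "p differentiable_on {0<..}" by simp
    thus ?thesis using that by (simp add: differentiable_on_eq_differentiable_at)
  qed
  have p1d: "p1 differentiable (at r)" if "r > 0" for r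
  proof -
    from ck have "Ck_on {0<..} (Suc 0) (\<lambda>r. frechet_derivative p (at r) 1)" by simp
    hence "p1 differentiable_on {0<..}" unfolding p1_def by simp
    thus ?thesis using that by (simp add: differentiable_on_eq_differentiable_at)
  qed
  define q where "q r = p1 r / r" for r
  have qd: "(q has_derivative FD q r) (at r)" if "r > 0" for r
  proof -
    have "q differentiable (at r)"
      unfolding q_def[abs_def] using p1d[OF that] that
      by (intro differentiable_divide differentiable_ident) auto
    thus ?thesis using frechet_derivative_works by blast
  qed
  have Rh: "(R has_derivative FD R y) (at y)" for y by (rule sm_has[OF smR])
  have chain: "FD (\<lambda>y. p (R y)) y h = FD R y h * p1 (R y)" for y h
  proof -
    have "(p has_derivative FD p (R y)) (at (R y))"
      using pd[OF Rpos] frechet_derivative_works by blast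
    from diff_chain_at[OF Rh this] have
      "((\<lambda>y. p (R y)) has_derivative (\<lambda>h. FD p (R y) (FD R y h))) (at y)"
      by (simp add: o_def)
    hence "FD (\<lambda>y. p (R y)) y h = FD p (R y) (FD R y h)" by (rule FD_eq)
    also have "\<dots> = FD R y h * p1 (R y)" unfolding p1_def
      using lin1 has_derivative_bounded_linear[OF \<open>(p has_derivative FD p (R y)) (at (R y))\<close>]
      by metis
    finally show ?thesis .
  qed
  have form: "(\<lambda>y. - FD (\<lambda>y. p (R y)) y a / R y) = (\<lambda>y. - (FD R y a * q (R y)))" for a
    by (rule ext) (simp add: chain q_def)
  define c where "c = FD q (R z) 1"
  have main: "FD (\<lambda>y. - FD (\<lambda>y. p (R y)) y a / R y) z b
     = - (FD (\<lambda>y. FD R y a) z b * q (R z) + FD R z a * (FD R z b * c))" for a b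
  proof -
    have Ra: "((\<lambda>y. FD R y a) has_derivative FD (\<lambda>y. FD R y a) z) (at z)"
      by (rule sm_has[OF sm_D[OF smR]])
    have qR: "((\<lambda>y. q (R y)) has_derivative (\<lambda>h. FD q (R z) (FD R z h))) (at z)"
      using diff_chain_at[OF Rh qd[OF Rpos]] by (simp add: o_def)
    have "((\<lambda>y. - (FD R y a * q (R y))) has_derivative
       (\<lambda>h. - (FD R z a * FD q (R z) (FD R z h) + FD (\<lambda>y. FD R y a) z h * q (R z)))) (at z)"
      by (intro derivative_eq_intros) (auto intro: Ra qR)
    hence "FD (\<lambda>y. - (FD R y a * q (R y))) z b
       = - (FD R z a * FD q (R z) (FD R z b) + FD (\<lambda>y. FD R y a) z b * q (R z))"
      by (rule FD_eq)
    moreover have "FD q (R z) (FD R z b) = FD R z b * c" unfolding c_def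
      using lin1 has_derivative_bounded_linear[OF qd[OF Rpos]] by metis
    ultimately show ?thesis unfolding form by simp
  qed
  show ?thesis unfolding main using sm_sym[OF smR, of v z w] by simp
qed



definition ug :: "(real \<Rightarrow> 'b \<Rightarrow> real) \<Rightarrow> real \<times> 'b \<Rightarrow> real" where
  "ug f = (\<lambda>(s, y). f s y)"

lemma dt_eq: "dt f t x = FD (ug f) (t, x) (1, 0)"
  by (simp add: dt_def ug_def)

lemma dx_eq: "dx coord k f t x = FD (ug f) (t, x) (0, axis (coord k) 1)"
  by (simp add: dx_def ug_def)

lemma dx_zero: "dx coord k (\<lambda>s y. 0) t x = 0"
proof -
  have "(\<lambda>(s::real, y::real^'a). 0::real) = (\<lambda>_. 0)" by auto
  thus ?thesis by (simp add: dx_def)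
qed

lemma dx_Ublock: "dx coord k (\<lambda>s y. Ublock coord u i s y j) t x
   = of_bool (blk j = i) * dx coord k (\<lambda>s y. vcomp coord u s y j) t x"
  by (cases "blk j = i") (simp_all add: Ublock_def dx_zero)

lemma Om: "ext_d1 coord (Ublock coord u i) t x k j
   = of_bool (blk j = i) * dx coord k (\<lambda>s y. vcomp coord u s y j) t x
     - of_bool (blk k = i) * dx coord j (\<lambda>s y. vcomp coord u s y k) t x"
  by (simp add: ext_d1_def dx_Ublock)

theorem theorem1:
  fixes u :: "real \<Rightarrow> real^'n \<Rightarrow> real^'n"
    and rho :: "real \<Rightarrow> real^'n \<Rightarrow> real"
    and p :: "real \<Rightarrow> real"
    and coord :: "nat \<Rightarrow> 'n"
    and d M :: nat
  assumes d_def: "d = CARD('n)"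
    and d_ge: "d \<ge> 3"
    and coord: "bij_betw coord {1..d} UNIV"
    and u_smooth: "\<forall>j. smooth_field (\<lambda>t x. u t x $ j)"
    and rho_smooth: "smooth_field rho"
    and rho_pos: "\<forall>t x. rho t x > 0"
    and p_smooth: "smooth_on {0<..} p"
    and momentum: "\<forall>t x. \<forall>j\<in>{1..d}.
        dt (\<lambda>s y. vcomp coord u s y j) t x
        + (\<Sum>k=1..d. vcomp coord u t x k * dx coord k (\<lambda>s y. vcomp coord u s y j) t x)
        = - dx coord j (\<lambda>s y. p (rho s y)) t x / rho t x"
    and continuity: "\<forall>t x.
        dt rho t x + (\<Sum>k=1..d. dx coord k (\<lambda>s y. rho s y * vcomp coord u s y k) t x) = 0"
    and schur: "\<forall>t x. \<forall>k\<in>{1..d}. \<forall>j\<in>{1..d}.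
        blk k > blk j \<longrightarrow> dx coord k (\<lambda>s y. vcomp coord u s y j) t x = 0"
    and M_def: "M = nat \<lfloor>(real d + 1) / 2\<rfloor>"
  shows
    "(\<forall>c :: nat \<Rightarrow> real.
        (\<forall>t x. \<forall>k\<in>{1..d}. \<forall>j\<in>{1..d}.
           (\<Sum>i=1..M. c i * ext_d1 coord (Ublock coord u i) t x k j) = 0)
        \<longrightarrow> (\<forall>i\<in>{1..M}. \<forall>t x. \<forall>k\<in>{1..d}. \<forall>j\<in>{1..d}.
               c i * ext_d1 coord (Ublock coord u i) t x k j = 0))
     \<and> (\<forall>t x. \<forall>k\<in>{1..d}. \<forall>j\<in>{1..d}.
          (\<Sum>i=1..M. ext_d1 coord (Ublock coord u i) t x k j)
          = ext_d1 coord (Uform coord u) t x k j)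
     \<and> (\<forall>i\<in>{1..M}. \<forall>t x. \<forall>k\<in>{1..d}. \<forall>j\<in>{1..d}.
          dt (\<lambda>s y. ext_d1 coord (Ublock coord u i) s y k j) t x
          + lie2 d coord (vcomp coord u) (ext_d1 coord (Ublock coord u i)) t x k j = 0)"
proof -
  have Md: "M = (d + 1) div 2"
  proof -
    have "(real d + 1) / 2 = real (d + 1) / real (2::nat)" by simp
    hence "\<lfloor>(real d + 1) / 2\<rfloor> = int ((d + 1) div 2)" by (simp only: floor_divide_of_nat_eq)
    thus ?thesis using M_def by simp
  qed
  have blkM: "blk j \<in> {1..M}" if "j \<in> {1..d}" for j
    using that unfolding Md blk_def by (auto intro: div_le_mono)
  define gg where "gg t x a b = dx coord a (\<lambda>s y. vcomp coord u s y b) t x" for t x a b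
  have sch: "gg t x a b = 0" if "a \<in> {1..d}" "b \<in> {1..d}" "blk a > blk b" for t x a b
    using schur that unfolding gg_def by blast
  have Om': "ext_d1 coord (Ublock coord u i) t x k j
     = of_bool (blk j = i) * gg t x k j - of_bool (blk k = i) * gg t x j k" for i t x k j
    unfolding gg_def by (rule Om)
  have P1: "\<forall>c :: nat \<Rightarrow> real.
        (\<forall>t x. \<forall>k\<in>{1..d}. \<forall>j\<in>{1..d}.
           (\<Sum>i=1..M. c i * ext_d1 coord (Ublock coord u i) t x k j) = 0)
        \<longrightarrow> (\<forall>i\<in>{1..M}. \<forall>t x. \<forall>k\<in>{1..d}. \<forall>j\<in>{1..d}.
               c i * ext_d1 coord (Ublock coord u i) t x k j = 0)"
  proof (intro allI impI ballI)
    fix c :: "nat \<Rightarrow> real" and i t x k j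
    assume H: "\<forall>t x. \<forall>k\<in>{1..d}. \<forall>j\<in>{1..d}. (\<Sum>i=1..M. c i * ext_d1 coord (Ublock coord u i) t x k j) = 0"
      and i: "i \<in> {1..M}" and k: "k \<in> {1..d}" and j: "j \<in> {1..d}"
    define m where "m = max (blk k) (blk j)"
    have m: "m \<in> {1..M}" using blkM[OF k] blkM[OF j] unfolding m_def by (auto simp: max_def)
    have z: "ext_d1 coord (Ublock coord u i') t x k j = 0" if "i' \<noteq> m" for i'
    proof -
      have "of_bool (blk j = i') * gg t x k j = 0"
        using sch[OF k j] that unfolding m_def by (cases "blk j = i'") (auto simp: max_def split: if_splits)
      moreover have "of_bool (blk k = i') * gg t x j k = 0"
        using sch[OF j k] that unfolding m_def by (cases "blk k = i'") (auto simp: max_def split: if_splits)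
      ultimately show ?thesis unfolding Om' by simp
    qed
    have "(\<Sum>i=1..M. c i * ext_d1 coord (Ublock coord u i) t x k j)
        = c m * ext_d1 coord (Ublock coord u m) t x k j
          + (\<Sum>i\<in>{1..M} - {m}. c i * ext_d1 coord (Ublock coord u i) t x k j)"
      using m by (simp add: sum.remove)
    also have "(\<Sum>i\<in>{1..M} - {m}. c i * ext_d1 coord (Ublock coord u i) t x k j) = 0"
      using z by (intro sum.neutral) auto
    finally have "c m * ext_d1 coord (Ublock coord u m) t x k j = 0" using H k j by simp
    thus "c i * ext_d1 coord (Ublock coord u i) t x k j = 0"
      using z by (cases "i = m") auto
  qed
  have P2: "\<forall>t x. \<forall>k\<in>{1..d}. \<forall>j\<in>{1..d}.
          (\<Sum>i=1..M. ext_d1 coord (Ublock coord u i) t x k j)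
          = ext_d1 coord (Uform coord u) t x k j"
  proof (intro allI ballI)
    fix t x k j assume k: "k \<in> {1..d}" and j: "j \<in> {1..d}"
    have s: "(\<Sum>i=1..M. of_bool (blk b = i) * c) = c" if "b \<in> {1..d}" for b and c :: real
    proof -
      have "(\<Sum>i=1..M. of_bool (blk b = i) * c) = (\<Sum>i\<in>{1..M}. if blk b = i then c else 0)"
        by (intro sum.cong) auto
      also have "\<dots> = c" using blkM[OF that] by (simp add: sum.delta)
      finally show ?thesis .
    qed
    show "(\<Sum>i=1..M. ext_d1 coord (Ublock coord u i) t x k j) = ext_d1 coord (Uform coord u) t x k j"
      unfolding Om' sum_subtractf s[OF j] s[OF k]
      by (simp add: ext_d1_def Uform_def gg_def)
  qed
  define e :: "nat \<Rightarrow> real \<times> (real^'n)" where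
    "e a = (if a = 0 then (1, 0) else (0, axis (coord a) 1))" for a
  define U where "U l = ug (\<lambda>s y. vcomp coord u s y l)" for l
  define R where "R = ug rho"
  define F where "F j = ug (\<lambda>s y. - dx coord j (\<lambda>s y. p (rho s y)) s y / rho s y)" for j
  have smU: "smooth (U l)" for l
    using u_smooth unfolding U_def ug_def smooth_def smooth_field_def smooth_on_def vcomp_def by blast
  have smR: "smooth R"
    using rho_smooth unfolding R_def ug_def smooth_def smooth_field_def smooth_on_def by blast
  have Rpos: "R y > 0" for y using rho_pos unfolding R_def ug_def by (simp add: case_prod_beta)
  have dxU: "dx coord a (\<lambda>s y. vcomp coord u s y l) t x = FD (U l) (t, x) (e a)" if "a \<in> {1..d}" for a l t x
    using that unfolding dx_eq U_def e_def by simp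
  have dtU: "dt (\<lambda>s y. vcomp coord u s y l) t x = FD (U l) (t, x) (e 0)" for l t x
    unfolding dt_eq U_def e_def by simp
  have vU: "vcomp coord u t x l = U l (t, x)" for t x l unfolding U_def ug_def by simp
  have mom: "FD (U j) y (e 0) + (\<Sum>l=1..d. U l y * FD (U j) y (e l)) = F j y" if j: "j \<in> {1..d}" for j y
  proof -
    obtain t x where y: "y = (t, x)" by fastforce
    have "dt (\<lambda>s y. vcomp coord u s y j) t x
        + (\<Sum>k=1..d. vcomp coord u t x k * dx coord k (\<lambda>s y. vcomp coord u s y j) t x)
        = - dx coord j (\<lambda>s y. p (rho s y)) t x / rho t x" using momentum j by blast
    moreover have "(\<Sum>k=1..d. vcomp coord u t x k * dx coord k (\<lambda>s y. vcomp coord u s y j) t x)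
        = (\<Sum>l=1..d. U l y * FD (U j) y (e l))"
      unfolding y by (intro sum.cong refl) (simp add: vU[of t x] dxU)
    ultimately show ?thesis unfolding y F_def dtU by (simp add: ug_def)
  qed
  have Fform: "F j = (\<lambda>y. - FD (\<lambda>y. p (R y)) y (e j) / R y)" if "j \<in> {1..d}" for j
  proof (rule ext)
    fix y :: "real \<times> (real^'n)"
    obtain t x where y: "y = (t, x)" by fastforce
    have "ug (\<lambda>s y. p (rho s y)) = (\<lambda>y. p (R y))" unfolding R_def ug_def by (auto simp: case_prod_beta)
    thus "F j y = - FD (\<lambda>y. p (R y)) y (e j) / R y"
      using that unfolding y F_def dx_eq e_def by (simp add: R_def ug_def)
  qed
  have Fsym: "FD (F j) z (e k) = FD (F k) z (e j)" if "k \<in> {1..d}" "j \<in> {1..d}" for k j z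
    unfolding Fform[OF that(1)] Fform[OF that(2)] by (rule pressure_sym[OF smR Rpos p_smooth])
  have schU: "FD (U j) y (e k) = 0" if "k \<in> {1..d}" "j \<in> {1..d}" "blk k > blk j" for k j y
  proof -
    obtain t x where y: "y = (t, x)" by fastforce
    show ?thesis using schur that unfolding y dxU[OF that(1), symmetric] by blast
  qed
  have WU: "ext_d1 coord (Ublock coord u i) t x a b = Wf U e i a b (t, x)"
    if "a \<in> {1..d}" "b \<in> {1..d}" for i t x a b
    unfolding Om Wf_def using that by (simp add: dxU)
  have ugW: "ug (\<lambda>s y. ext_d1 coord (Ublock coord u i) s y a b) = Wf U e i a b"
    if "a \<in> {1..d}" "b \<in> {1..d}" for i a b
    by (rule ext) (auto simp: ug_def WU[OF that])
  have ugS: "ug (\<lambda>s y. \<Sum>l=1..d. vcomp coord u s y l * ext_d1 coord (Ublock coord u i) s y l b)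
       = (\<lambda>y. \<Sum>l=1..d. U l y * Wf U e i l b y)" if "b \<in> {1..d}" for i b
  proof (rule ext)
    fix y :: "real \<times> (real^'n)"
    obtain t x where y: "y = (t, x)" by fastforce
    show "ug (\<lambda>s y. \<Sum>l=1..d. vcomp coord u s y l * ext_d1 coord (Ublock coord u i) s y l b) y
       = (\<Sum>l=1..d. U l y * Wf U e i l b y)"
      unfolding y ug_def by (simp, intro sum.cong refl) (simp add: vU WU[OF _ that])
  qed
  have dxe: "dx coord a f t x = FD (ug f) (t, x) (e a)" if "a \<in> {1..d}" for a f t x
    using that unfolding dx_eq e_def by simp
  have P3: "\<forall>i\<in>{1..M}. \<forall>t x. \<forall>k\<in>{1..d}. \<forall>j\<in>{1..d}.
          dt (\<lambda>s y. ext_d1 coord (Ublock coord u i) s y k j) t x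
          + lie2 d coord (vcomp coord u) (ext_d1 coord (Ublock coord u i)) t x k j = 0"
  proof (intro allI ballI)
    fix i t x k j assume k: "k \<in> {1..d}" and j: "j \<in> {1..d}"
    have L1: "lie2 d coord (vcomp coord u) (ext_d1 coord (Ublock coord u i)) t x k j
      = (\<Sum>l=1..d. vcomp coord u t x l * (dx coord l (\<lambda>s y. ext_d1 coord (Ublock coord u i) s y k j) t x
           + dx coord k (\<lambda>s y. ext_d1 coord (Ublock coord u i) s y j l) t x
           + dx coord j (\<lambda>s y. ext_d1 coord (Ublock coord u i) s y l k) t x))
        + (dx coord k (\<lambda>s y. \<Sum>l=1..d. vcomp coord u s y l * ext_d1 coord (Ublock coord u i) s y l j) t x
         - dx coord j (\<lambda>s y. \<Sum>l=1..d. vcomp coord u s y l * ext_d1 coord (Ublock coord u i) s y l k) t x)"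
      unfolding lie2_def iota3_def ext_d2_def
      by (simp only: ext_d1_def[where a="iota2 d (vcomp coord u) (ext_d1 coord (Ublock coord u i))"] iota2_def)
    have L2: "(\<Sum>l=1..d. vcomp coord u t x l * (dx coord l (\<lambda>s y. ext_d1 coord (Ublock coord u i) s y k j) t x
           + dx coord k (\<lambda>s y. ext_d1 coord (Ublock coord u i) s y j l) t x
           + dx coord j (\<lambda>s y. ext_d1 coord (Ublock coord u i) s y l k) t x))
       = (\<Sum>l=1..d. U l (t, x) * (FD (Wf U e i k j) (t, x) (e l) + FD (Wf U e i j l) (t, x) (e k)
            + FD (Wf U e i l k) (t, x) (e j)))"
    proof (intro sum.cong refl)
      fix l assume l: "l \<in> {1..d}"
      show "vcomp coord u t x l * (dx coord l (\<lambda>s y. ext_d1 coord (Ublock coord u i) s y k j) t x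
           + dx coord k (\<lambda>s y. ext_d1 coord (Ublock coord u i) s y j l) t x
           + dx coord j (\<lambda>s y. ext_d1 coord (Ublock coord u i) s y l k) t x)
        = U l (t, x) * (FD (Wf U e i k j) (t, x) (e l) + FD (Wf U e i j l) (t, x) (e k)
            + FD (Wf U e i l k) (t, x) (e j))"
        unfolding dxe[OF l] dxe[OF k] dxe[OF j] ugW[OF k j] ugW[OF j l] ugW[OF l k] vU ..
    qed
    have "dt (\<lambda>s y. ext_d1 coord (Ublock coord u i) s y k j) t x = FD (Wf U e i k j) (t, x) (e 0)"
      unfolding dt_eq ugW[OF k j] e_def by simp
    moreover have "dx coord k (\<lambda>s y. \<Sum>l=1..d. vcomp coord u s y l * ext_d1 coord (Ublock coord u i) s y l j) t x
       = FD (\<lambda>y. \<Sum>l=1..d. U l y * Wf U e i l j y) (t, x) (e k)"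
      unfolding dxe[OF k] ugS[OF j] ..
    moreover have "dx coord j (\<lambda>s y. \<Sum>l=1..d. vcomp coord u s y l * ext_d1 coord (Ublock coord u i) s y l k) t x
       = FD (\<lambda>y. \<Sum>l=1..d. U l y * Wf U e i l k y) (t, x) (e j)"
      unfolding dxe[OF j] ugS[OF k] ..
    ultimately show "dt (\<lambda>s y. ext_d1 coord (Ublock coord u i) s y k j) t x
          + lie2 d coord (vcomp coord u) (ext_d1 coord (Ublock coord u i)) t x k j = 0"
      unfolding L1 L2
      using core[of U d e F "(t, x)", OF smU mom Fsym schU k j, of i] by (simp add: add.assoc)
  qed
  show ?thesis using P1 P2 P3 by blast
qed


end
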